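(* If all valuation functions are symmetric submodular (and the item cost functions are arbitrary non-decreasing functions $c_j:2^N\to\mathbb{R}_{\ge 0}$), then the mechanism IACSM is weakly group-strategyproof: for every coalition $Q\subseteq N$, every true symmetric submodular valuations $v_Q$ of $Q$, every symmetric submodular reports $v_{-Q}$ of the other players and every symmetric submodular misreport $b_Q$, there exists $i\in Q$ with $u_i(b_Q,v_{-Q})\le u_i(v_Q,v_{-Q})$.
   Context: Players $N=\{1,\dots,n\}$, items $M=\{1,\dots,m\}$. Valuations $v_i:2^M\to\mathbb{R}_{\ge0}$ are non-decreasing; symmetric means $f(S)=f(T)$ whenever $|S|=|T|$, submodular means $f(S\cup\{x\})-f(S)\ge f(T\cup\{x\})-f(T)$ for $S\subseteq T$, $x\notin T$. Given the declared profile, the mechanism outputs bundles $A_i$ and payments $p_i$; $u_i(\cdot)=v_i(A_i)-p_i$ measured with player $i$'s true valuation $v_i$. Mechanism IACSM (input: declared valuations $b$): maintain active set $X=N$, sets $T_j=N$ and cost shares $\chi_j=c_j(N)/n$ for all items $j$. While $X\neq\emptyset$: (1) every $i\in X$ computes $A_i\in\arg\max_{S\subseteq M}\{b_i(S)-\sum_{j\in S}\chi_j\}$, choosing among maximizers one of maximum cardinality $k$, and among those the $k$ items with smallest current $\chi_j$ (item ties by index); (2) choose $i^*\in X$ with $|A_{i^*}|$ minimum (ties by smallest index); (3) assign $A_{i^*}$ to $i^*$ permanently and remove $i^*$ from $X$; (4) for every item $j\notin A_{i^*}$ set $T_j:=T_j\setminus\{i^*\}$ and, if $T_j\ne\emptyset$,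 set $\chi_j:=\max\{\chi_j,c_j(T_j)/|T_j|\}$. Output the assigned bundles and payments $p_i=\sum_{j\in A_i}\chi_j$ with final cost shares. *)

theory Defs
  imports Complex_Main
begin

(* Players are N = {..<n}, items are M = {..<m} (index order = tie-breaking order).
   A valuation is a function nat set => real (only its values on subsets of M matter);
   a cost function c j :: nat set => real (only values on subsets of N matter). *)

definition nondecreasing_on :: "'a set \<Rightarrow> ('a set \<Rightarrow> real) \<Rightarrow> bool" where
  "nondecreasing_on U f \<longleftrightarrow> (\<forall>S T. S \<subseteq> T \<longrightarrow> T \<subseteq> U \<longrightarrow> f S \<le> f T)"

definition nonneg_on :: "'a set \<Rightarrow> ('a set \<Rightarrow> real) \<Rightarrow> bool" where
  "nonneg_on U f \<longleftrightarrow> (\<forall>S. S \<subseteq> U \<longrightarrow> 0 \<le> f S)"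

definition symmetric_on :: "'a set \<Rightarrow> ('a set \<Rightarrow> real) \<Rightarrow> bool" where
  "symmetric_on U f \<longleftrightarrow> (\<forall>S T. S \<subseteq> U \<longrightarrow> T \<subseteq> U \<longrightarrow> card S = card T \<longrightarrow> f S = f T)"

definition submodular_on :: "'a set \<Rightarrow> ('a set \<Rightarrow> real) \<Rightarrow> bool" where
  "submodular_on U f \<longleftrightarrow> (\<forall>S T x. S \<subseteq> T \<longrightarrow> T \<subseteq> U \<longrightarrow> x \<in> U \<longrightarrow> x \<notin> T \<longrightarrow>
      f (insert x S) - f S \<ge> f (insert x T) - f T)"

definition sym_submod_valuation :: "nat \<Rightarrow> (nat set \<Rightarrow> real) \<Rightarrow> bool" where
  "sym_submod_valuation m f \<longleftrightarrow> nonneg_on {..<m} f \<and> nondecreasing_on {..<m} f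
      \<and> symmetric_on {..<m} f \<and> submodular_on {..<m} f"

definition cheaper :: "(nat \<Rightarrow> real) \<Rightarrow> nat \<Rightarrow> nat \<Rightarrow> bool" where
  "cheaper chi j' j \<longleftrightarrow> chi j' < chi j \<or> (chi j' = chi j \<and> j' < j)"

definition net_value :: "(nat set \<Rightarrow> real) \<Rightarrow> (nat \<Rightarrow> real) \<Rightarrow> nat set \<Rightarrow> real" where
  "net_value f chi S = f S - sum chi S"

definition is_maximizer :: "nat \<Rightarrow> (nat set \<Rightarrow> real) \<Rightarrow> (nat \<Rightarrow> real) \<Rightarrow> nat set \<Rightarrow> bool" where
  "is_maximizer m f chi S \<longleftrightarrow> S \<subseteq> {..<m} \<and>
     (\<forall>S'. S' \<subseteq> {..<m} \<longrightarrow> net_value f chi S' \<le> net_value f chi S)"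

definition demand_size :: "nat \<Rightarrow> (nat set \<Rightarrow> real) \<Rightarrow> (nat \<Rightarrow> real) \<Rightarrow> nat" where
  "demand_size m f chi = Max (card ` {S. is_maximizer m f chi S})"

definition cheapest :: "nat \<Rightarrow> (nat \<Rightarrow> real) \<Rightarrow> nat \<Rightarrow> nat set" where
  "cheapest m chi k = {j \<in> {..<m}. card {j' \<in> {..<m}. cheaper chi j' j} < k}"

definition demand :: "nat \<Rightarrow> (nat set \<Rightarrow> real) \<Rightarrow> (nat \<Rightarrow> real) \<Rightarrow> nat set" where
  "demand m f chi = cheapest m chi (demand_size m f chi)"

record mstate =
  active :: "nat set"
  Tset   :: "nat \<Rightarrow> nat set"
  share  :: "nat \<Rightarrow> real"
  alloc  :: "nat \<Rightarrow> nat set"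

definition iacsm_init :: "nat \<Rightarrow> (nat \<Rightarrow> nat set \<Rightarrow> real) \<Rightarrow> mstate" where
  "iacsm_init n c = \<lparr> active = {..<n}, Tset = (\<lambda>j. {..<n}),
      share = (\<lambda>j. c j {..<n} / real n), alloc = (\<lambda>i. {}) \<rparr>"

definition iacsm_step :: "nat \<Rightarrow> (nat \<Rightarrow> nat set \<Rightarrow> real) \<Rightarrow> (nat \<Rightarrow> nat set \<Rightarrow> real)
    \<Rightarrow> mstate \<Rightarrow> mstate" where
  "iacsm_step m c b s =
    (if active s = {} then s else
     (let X = active s;
          D = (\<lambda>i. demand m (b i) (share s));
          istar = (LEAST i. i \<in> X \<and> (\<forall>i'\<in>X. card (D i) \<le> card (D i')));
          A = D istar;
          T' = (\<lambda>j. if j \<notin> A then Tset s j - {istar} else Tset s j);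
          chi' = (\<lambda>j. if j \<notin> A \<and> T' j \<noteq> {}
                       then max (share s j) (c j (T' j) / real (card (T' j)))
                       else share s j)
      in \<lparr> active = X - {istar}, Tset = T', share = chi', alloc = (alloc s)(istar := A) \<rparr>))"

(* each iteration removes exactly one player, so n iterations empty the active set *)
definition iacsm_final :: "nat \<Rightarrow> nat \<Rightarrow> (nat \<Rightarrow> nat set \<Rightarrow> real) \<Rightarrow> (nat \<Rightarrow> nat set \<Rightarrow> real)
    \<Rightarrow> mstate" where
  "iacsm_final n m c b = (iacsm_step m c b ^^ n) (iacsm_init n c)"

definition iacsm_bundle :: "nat \<Rightarrow> nat \<Rightarrow> (nat \<Rightarrow> nat set \<Rightarrow> real) \<Rightarrow> (nat \<Rightarrow> nat set \<Rightarrow> real)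
    \<Rightarrow> nat \<Rightarrow> nat set" where
  "iacsm_bundle n m c b i = alloc (iacsm_final n m c b) i"

definition iacsm_payment :: "nat \<Rightarrow> nat \<Rightarrow> (nat \<Rightarrow> nat set \<Rightarrow> real) \<Rightarrow> (nat \<Rightarrow> nat set \<Rightarrow> real)
    \<Rightarrow> nat \<Rightarrow> real" where
  "iacsm_payment n m c b i = (\<Sum>j\<in>iacsm_bundle n m c b i. share (iacsm_final n m c b) j)"

(* utility of player i with true valuation vi when the declared profile is b *)
definition iacsm_utility :: "nat \<Rightarrow> nat \<Rightarrow> (nat \<Rightarrow> nat set \<Rightarrow> real) \<Rightarrow> (nat set \<Rightarrow> real)
    \<Rightarrow> (nat \<Rightarrow> nat set \<Rightarrow> real) \<Rightarrow> nat \<Rightarrow> real" where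
  "iacsm_utility n m c vi b i = vi (iacsm_bundle n m c b i) - iacsm_payment n m c b i"

end

theory Submission
  imports Defs
begin


lemma cheaper_irrefl: "\<not> cheaper chi j j"
  by (auto simp: cheaper_def)

lemma cheaper_trans: "cheaper chi a b \<Longrightarrow> cheaper chi b d \<Longrightarrow> cheaper chi a d"
  by (auto simp: cheaper_def)

lemma cheaper_total: "a \<noteq> b \<Longrightarrow> cheaper chi a b \<or> cheaper chi b a"
  by (auto simp: cheaper_def)

lemma cheaper_le: "cheaper chi a b \<Longrightarrow> chi a \<le> chi b"
  by (auto simp: cheaper_def)

definition rk :: "nat \<Rightarrow> (nat \<Rightarrow> real) \<Rightarrow> nat \<Rightarrow> nat" where
  "rk m chi j = card {j' \<in> {..<m}. cheaper chi j' j}"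

lemma cheapest_rk: "cheapest m chi k = {j \<in> {..<m}. rk m chi j < k}"
  by (simp add: cheapest_def rk_def)

lemma rk_less: "cheaper chi a b \<Longrightarrow> a < m \<Longrightarrow> rk m chi a < rk m chi b"
  unfolding rk_def
proof (rule psubset_card_mono)
  assume h: "cheaper chi a b" "a < m"
  show "finite {j' \<in> {..<m}. cheaper chi j' b}" by simp
  show "{j' \<in> {..<m}. cheaper chi j' a} \<subset> {j' \<in> {..<m}. cheaper chi j' b}"
    using h cheaper_trans[of chi _ a b] cheaper_irrefl[of chi a] by blast
qed

lemma rk_bound: "j < m \<Longrightarrow> rk m chi j < m"
proof -
  assume j: "j < m"
  have "{j' \<in> {..<m}. cheaper chi j' j} \<subset> {..<m}" using j cheaper_irrefl[of chi j] by blast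
  then show ?thesis unfolding rk_def by (metis card_lessThan finite_lessThan psubset_card_mono)
qed

lemma rk_inj: "inj_on (rk m chi) {..<m}"
proof (rule inj_onI)
  fix a b assume a: "a \<in> {..<m}" and b: "b \<in> {..<m}" and e: "rk m chi a = rk m chi b"
  show "a = b"
  proof (rule ccontr)
    assume "a \<noteq> b"
    then have "cheaper chi a b \<or> cheaper chi b a" by (rule cheaper_total)
    then show False using rk_less[of chi a b m] rk_less[of chi b a m] a b e by auto
  qed
qed

lemma rk_image: "rk m chi ` {..<m} = {..<m}"
proof -
  have "rk m chi ` {..<m} \<subseteq> {..<m}" using rk_bound by auto
  moreover have "card (rk m chi ` {..<m}) = card {..<m::nat}"
    using rk_inj card_image by blast
  ultimately show ?thesis by (simp add: card_subset_eq)
qed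

lemma card_cheapest: "card (cheapest m chi k) = min k m"
proof -
  have "rk m chi ` cheapest m chi k = {..<m} \<inter> {..<k}"
    using rk_image[of m chi] unfolding cheapest_rk by auto
  moreover have "inj_on (rk m chi) (cheapest m chi k)"
    using rk_inj by (rule inj_on_subset) (auto simp: cheapest_rk)
  ultimately have "card (cheapest m chi k) = card ({..<m} \<inter> {..<k})"
    by (metis card_image)
  also have "{..<m} \<inter> {..<k} = {..<min k m}" by auto
  finally show ?thesis by simp
qed

lemma cheapest_sub: "cheapest m chi k \<subseteq> {..<m}"
  by (auto simp: cheapest_def)

lemma cheapest_mono: "k \<le> k' \<Longrightarrow> cheapest m chi k \<subseteq> cheapest m chi k'"
  by (auto simp: cheapest_def)

lemma cheapest_down: "j \<in> cheapest m chi k \<Longrightarrow> j' < m \<Longrightarrow> cheaper chi j' j \<Longrightarrow> j' \<in> cheapest m chi k"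
  using rk_less[of chi j' j m] by (auto simp: cheapest_rk)

lemma cheapest_vs: "j \<in> cheapest m chi k \<Longrightarrow> j' < m \<Longrightarrow> j' \<notin> cheapest m chi k \<Longrightarrow> cheaper chi j j'"
  using cheapest_down[of j m chi k j'] cheaper_total[of j j' chi] by auto

lemma cheapest_vs_le: "j \<in> cheapest m chi k \<Longrightarrow> j' < m \<Longrightarrow> j' \<notin> cheapest m chi k \<Longrightarrow> chi j \<le> chi j'"
  using cheapest_vs cheaper_le by blast

lemma cheapest_sum_le:
  assumes S: "S \<subseteq> {..<m}" and cS: "card S = k"
  shows "sum chi (cheapest m chi k) \<le> sum chi S"
proof -
  define A where "A = cheapest m chi k"
  have km: "k \<le> m" using card_mono[OF finite_lessThan S] cS by simp
  have cA: "card A = k" using km card_cheapest[of m chi k] by (simp add: A_def)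
  have fA: "finite A" unfolding A_def by (rule finite_subset[OF cheapest_sub]) simp
  have fS: "finite S" by (rule finite_subset[OF S]) simp
  have c1: "card (A - S) = card (S - A)"
  proof -
    have "card (A - S) = card A - card (A \<inter> S)" using fA by (simp add: card_Diff_subset_Int)
    moreover have "card (S - A) = card S - card (S \<inter> A)" using fS by (simp add: card_Diff_subset_Int)
    moreover have "S \<inter> A = A \<inter> S" by blast
    ultimately show ?thesis using cA cS by simp
  qed
  have le: "\<And>x y. x \<in> A - S \<Longrightarrow> y \<in> S - A \<Longrightarrow> chi x \<le> chi y"
    using cheapest_vs_le S unfolding A_def by blast
  have "sum chi (A - S) \<le> sum chi (S - A)"
  proof (cases "A - S = {}")
    case True
    then have "card (S - A) = 0" using c1 by (metis card.empty)
    then have "S - A = {}" using fS by simp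
    with True show ?thesis by simp
  next
    case False
    define M where "M = Max (chi ` (A - S))"
    have fin: "finite (A - S)" using fA by simp
    have Min: "M \<in> chi ` (A - S)" using False fin by (simp add: M_def)
    have "sum chi (A - S) \<le> of_nat (card (A - S)) * M"
      using sum_bounded_above[of "A - S" chi M] fin by (simp add: M_def)
    also have "\<dots> = of_nat (card (S - A)) * M" using c1 by simp
    also have "\<dots> \<le> sum chi (S - A)"
    proof -
      obtain x0 where x0: "x0 \<in> A - S" "M = chi x0" using Min by blast
      have "\<And>y. y \<in> S - A \<Longrightarrow> M \<le> chi y" using le x0 by simp
      then show ?thesis using sum_bounded_below[of "S - A" M chi] by simp
    qed
    finally show ?thesis .
  qed
  moreover have "sum chi A = sum chi (A - S) + sum chi (A \<inter> S)"
    using sum.Int_Diff[OF fA, of chi S] by simp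
  moreover have "sum chi S = sum chi (S - A) + sum chi (A \<inter> S)"
    using sum.Int_Diff[OF fS, of chi A] by (simp add: inf_commute)
  ultimately show ?thesis by (simp add: A_def)
qed


lemma cheapest_stable:
  assumes eq: "\<And>j. j \<in> cheapest m chi k \<Longrightarrow> chi' j = chi j"
    and ge: "\<And>j. chi j \<le> chi' j"
  shows "cheapest m chi' k = cheapest m chi k"
proof -
  define A where "A = cheapest m chi k"
  have key: "\<And>j j'. j \<in> A \<Longrightarrow> j' < m \<Longrightarrow> cheaper chi' j' j \<longleftrightarrow> cheaper chi j' j"
  proof -
    fix j j' assume j: "j \<in> A" and j': "j' < m"
    show "cheaper chi' j' j \<longleftrightarrow> cheaper chi j' j"
    proof (cases "j' \<in> A")
      case True then show ?thesis using j eq by (simp add: A_def cheaper_def)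
    next
      case False
      then have c: "cheaper chi j j'" using cheapest_vs j j' by (simp add: A_def)
      have "\<not> cheaper chi j' j" using c cheaper_trans cheaper_irrefl by blast
      moreover have "\<not> cheaper chi' j' j"
        using c ge[of j'] eq[of j] j by (auto simp: cheaper_def A_def)
      ultimately show ?thesis by simp
    qed
  qed
  have "A \<subseteq> cheapest m chi' k"
  proof
    fix j assume j: "j \<in> A"
    have "{j' \<in> {..<m}. cheaper chi' j' j} = {j' \<in> {..<m}. cheaper chi j' j}"
      using key[OF j] by auto
    then show "j \<in> cheapest m chi' k" using j by (simp add: A_def cheapest_def)
  qed
  moreover have "cheapest m chi' k \<subseteq> A"
  proof
    fix j assume j: "j \<in> cheapest m chi' k"
    show "j \<in> A"
    proof (rule ccontr)
      assume nj: "j \<notin> A"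
      have jm: "j < m" using j by (simp add: cheapest_def)
      have "A \<subseteq> {j' \<in> {..<m}. cheaper chi' j' j}"
      proof
        fix a assume a: "a \<in> A"
        have "cheaper chi a j" using cheapest_vs a jm nj by (simp add: A_def)
        then have "cheaper chi' a j" using eq[of a] a ge[of j] by (auto simp: cheaper_def A_def)
        then show "a \<in> {j' \<in> {..<m}. cheaper chi' j' j}" using a cheapest_sub by (auto simp: A_def)
      qed
      then have "card A \<le> card {j' \<in> {..<m}. cheaper chi' j' j}" by (intro card_mono) auto
      moreover have "card A = min k m" by (simp add: A_def card_cheapest)
      moreover have "card {j' \<in> {..<m}. cheaper chi' j' j} < k" using j by (simp add: cheapest_def)
      moreover have "card {j' \<in> {..<m}. cheaper chi' j' j} < m" using rk_bound[OF jm] by (simp add: rk_def)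
      ultimately show False by linarith
    qed
  qed
  ultimately show ?thesis by (simp add: A_def)
qed



abbreviation hv where "hv m f chi k \<equiv> net_value f chi (cheapest m chi k)"

lemma cheapest_Suc:
  assumes "k < m"
  obtains x where "x \<notin> cheapest m chi k" "x < m" "cheapest m chi (Suc k) = insert x (cheapest m chi k)"
proof -
  have sub: "cheapest m chi k \<subseteq> cheapest m chi (Suc k)" by (rule cheapest_mono) simp
  have fin: "finite (cheapest m chi (Suc k))" by (rule finite_subset[OF cheapest_sub]) simp
  have "card (cheapest m chi (Suc k) - cheapest m chi k) = Suc k - k"
    using card_Diff_subset[OF finite_subset[OF sub fin] sub] assms by (simp add: card_cheapest)
  then have "card (cheapest m chi (Suc k) - cheapest m chi k) = 1" by simp
  then obtain x where x: "cheapest m chi (Suc k) - cheapest m chi k = {x}" by (rule card_1_singletonE)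
  then have "x \<notin> cheapest m chi k" "cheapest m chi (Suc k) = insert x (cheapest m chi k)"
    using sub by blast+
  moreover have "x < m" using x cheapest_sub by blast
  ultimately show ?thesis using that by blast
qed

lemma sym_eq:
  assumes "sym_submod_valuation m f" "S \<subseteq> {..<m}" "T \<subseteq> {..<m}" "card S = card T"
  shows "f S = f T"
  using assms unfolding sym_submod_valuation_def symmetric_on_def by blast

lemma concave_step:
  assumes f: "sym_submod_valuation m f" and k: "Suc (Suc k) \<le> m"
  shows "hv m f chi (Suc (Suc k)) - hv m f chi (Suc k) \<le> hv m f chi (Suc k) - hv m f chi k"
proof -
  obtain x where x: "x \<notin> cheapest m chi k" "x < m" "cheapest m chi (Suc k) = insert x (cheapest m chi k)"
    using cheapest_Suc[of k m chi] k by auto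
  obtain y where y: "y \<notin> cheapest m chi (Suc k)" "y < m" "cheapest m chi (Suc (Suc k)) = insert y (cheapest m chi (Suc k))"
    using cheapest_Suc[of "Suc k" m chi] k by auto
  define S where "S = cheapest m chi k"
  define T where "T = cheapest m chi (Suc k)"
  have ST: "S \<subseteq> T" "T \<subseteq> {..<m}" "S \<subseteq> {..<m}" unfolding S_def T_def
    using cheapest_mono cheapest_sub by auto
  have finS: "finite S" "finite T" using finite_subset[OF ST(3)] finite_subset[OF ST(2)] by auto
  have yS: "y \<notin> S" using y ST unfolding T_def by auto
  have yT: "y \<notin> T" using y unfolding T_def by auto
  have sm: "submodular_on {..<m} f" using f by (simp add: sym_submod_valuation_def)
  have sub: "f (insert y S) - f S \<ge> f (insert y T) - f T"
    using sm[unfolded submodular_on_def, rule_format, of S T y] ST yT y(2) by simp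
  have cc: "card (insert y S) = card T" using yS finS x
    by (simp add: S_def T_def card_cheapest)
  have e1: "f (insert y S) = f T"
    by (intro sym_eq[OF f _ _ cc]) (use ST y in auto)
  have xy: "chi x \<le> chi y"
    using cheapest_vs_le[of x m chi "Suc k" y] x y by auto
  have s1: "sum chi T = chi x + sum chi S" using x finS by (simp add: S_def T_def)
  have s2: "sum chi (insert y T) = chi y + sum chi T" using yT finS by simp
  show ?thesis using sub e1 xy s1 s2 y(3) unfolding net_value_def S_def[symmetric] T_def[symmetric]
    by simp
qed

lemma delta_antitone:
  assumes f: "sym_submod_valuation m f" and jl: "j \<le> l" and l: "Suc l \<le> m"
  shows "hv m f chi (Suc l) - hv m f chi l \<le> hv m f chi (Suc j) - hv m f chi j"
  using jl l
proof (induction l rule: dec_induct)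
  case base then show ?case by simp
next
  case (step l)
  have "hv m f chi (Suc (Suc l)) - hv m f chi (Suc l) \<le> hv m f chi (Suc l) - hv m f chi l"
    using concave_step[OF f, of l chi] step by simp
  then show ?case using step by simp
qed

lemma unimodal:
  assumes f: "sym_submod_valuation m f" and K: "K \<le> m"
    and mx: "\<And>j. j \<le> m \<Longrightarrow> hv m f chi j \<le> hv m f chi K"
    and ab: "a \<le> b" "b \<le> K"
  shows "hv m f chi a \<le> hv m f chi b"
proof -
  have inc: "hv m f chi j \<le> hv m f chi (Suc j)" if j: "j < K" for j
  proof (rule ccontr)
    assume neg: "\<not> ?thesis"
    have "hv m f chi l < hv m f chi j" if "Suc j \<le> l" "l \<le> K" for l
      using that
    proof (induction l rule: dec_induct)
      case base then show ?case using neg by simp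
    next
      case (step l)
      have "hv m f chi (Suc l) - hv m f chi l \<le> hv m f chi (Suc j) - hv m f chi j"
        using delta_antitone[OF f, of j l chi] step K by simp
      then show ?case using step neg by simp
    qed
    note hh = this
    have "hv m f chi K < hv m f chi j" by (rule hh) (use j in auto)
    moreover have "hv m f chi j \<le> hv m f chi K" using mx j K by simp
    ultimately show False by simp
  qed
  show ?thesis using ab
  proof (induction b rule: dec_induct)
    case base then show ?case by simp
  next
    case (step b)
    then show ?case using inc[of b] by simp
  qed
qed


lemma ex_maximizer: "\<exists>S. is_maximizer m f chi S"
proof -
  define M where "M = Max (net_value f chi ` Pow {..<m})"
  have fin: "finite (net_value f chi ` Pow {..<m})" by simp
  have ne: "net_value f chi ` Pow {..<m} \<noteq> {}" by blast
  have "M \<in> net_value f chi ` Pow {..<m}" unfolding M_def using Max_in[OF fin ne] .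
  then obtain S where S: "S \<subseteq> {..<m}" "net_value f chi S = M" by auto
  have "\<And>S'. S' \<subseteq> {..<m} \<Longrightarrow> net_value f chi S' \<le> M"
    unfolding M_def by (rule Max_ge[OF fin]) simp
  then show ?thesis using S unfolding is_maximizer_def by metis
qed

lemma maximizers_finite: "finite {S. is_maximizer m f chi S}"
  by (rule finite_subset[of _ "Pow {..<m}"]) (auto simp: is_maximizer_def)

lemma ds_in: "demand_size m f chi \<in> card ` {S. is_maximizer m f chi S}"
proof -
  have "card ` {S. is_maximizer m f chi S} \<noteq> {}" using ex_maximizer by blast
  then show ?thesis unfolding demand_size_def using maximizers_finite by (intro Max_in) auto
qed

lemma ds_ge: "is_maximizer m f chi S \<Longrightarrow> card S \<le> demand_size m f chi"
  unfolding demand_size_def using maximizers_finite by (intro Max_ge) auto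

lemma ds_le_m: "demand_size m f chi \<le> m"
proof -
  obtain S where S: "is_maximizer m f chi S" "card S = demand_size m f chi" using ds_in by force
  then have "S \<subseteq> {..<m}" by (simp add: is_maximizer_def)
  then have "card S \<le> m" using card_mono[of "{..<m}" S] by simp
  then show ?thesis using S by simp
qed

lemma card_demand: "card (demand m f chi) = demand_size m f chi"
  unfolding demand_def using ds_le_m[of m f chi] by (simp add: card_cheapest)

lemma demand_sub: "demand m f chi \<subseteq> {..<m}"
  unfolding demand_def by (rule cheapest_sub)

lemma demand_max:
  assumes f: "sym_submod_valuation m f"
  shows "is_maximizer m f chi (demand m f chi)"
proof -
  obtain S where S: "is_maximizer m f chi S" "card S = demand_size m f chi"
    using ds_in[of m f chi] by (auto simp del: mem_Collect_eq)
  have Sm: "S \<subseteq> {..<m}" using S by (simp add: is_maximizer_def)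
  have "f (demand m f chi) = f S"
    by (rule sym_eq[OF f demand_sub Sm]) (simp add: card_demand S)
  moreover have "sum chi (demand m f chi) \<le> sum chi S"
    unfolding demand_def using cheapest_sum_le[OF Sm, of "card S" chi] S by simp
  ultimately have le1: "net_value f chi S \<le> net_value f chi (demand m f chi)"
    by (simp add: net_value_def)
  have le2: "\<And>S'. S' \<subseteq> {..<m} \<Longrightarrow> net_value f chi S' \<le> net_value f chi S"
    using S(1) unfolding is_maximizer_def by blast
  show ?thesis unfolding is_maximizer_def
  proof (intro conjI allI impI)
    show "demand m f chi \<subseteq> {..<m}" by (rule demand_sub)
    fix S' assume "S' \<subseteq> {..<m}"
    then show "net_value f chi S' \<le> net_value f chi (demand m f chi)" using le2 le1 by (meson order_trans)
  qed
qed

lemma hv_le_ds: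
  assumes f: "sym_submod_valuation m f"
  shows "hv m f chi j \<le> hv m f chi (demand_size m f chi)"
proof -
  have "is_maximizer m f chi (cheapest m chi (demand_size m f chi))"
    using demand_max[OF f, of chi] by (simp add: demand_def)
  then show ?thesis unfolding is_maximizer_def using cheapest_sub[of m chi j] by blast
qed

lemma unimodal_ds:
  assumes f: "sym_submod_valuation m f" and ab: "a \<le> b" "b \<le> demand_size m f chi"
  shows "hv m f chi a \<le> hv m f chi b"
  by (rule unimodal[OF f ds_le_m hv_le_ds[OF f] ab])

lemma ds_mono:
  assumes f: "sym_submod_valuation m f" and k: "k \<le> demand_size m f chi"
    and eq: "\<And>j. j \<in> cheapest m chi k \<Longrightarrow> chi' j = chi j"
    and ge: "\<And>j. chi j \<le> chi' j"
  shows "k \<le> demand_size m f chi'"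
proof (rule ccontr)
  assume "\<not> ?thesis"
  then have lt: "demand_size m f chi' < k" by simp
  define K' where "K' = demand_size m f chi'"
  define A where "A = cheapest m chi k"
  have km: "k \<le> m" using k ds_le_m[of m f chi] by simp
  obtain S where S: "is_maximizer m f chi' S" "card S = K'"
    using ds_in[of m f chi'] unfolding K'_def by (auto simp del: mem_Collect_eq)
  have Sm: "S \<subseteq> {..<m}" using S by (simp add: is_maximizer_def)
  have "net_value f chi' S \<le> net_value f chi S"
    using ge by (simp add: net_value_def sum_mono)
  also have "\<dots> \<le> hv m f chi K'"
  proof -
    have "f (cheapest m chi K') = f S"
      by (rule sym_eq[OF f cheapest_sub Sm]) (simp add: card_cheapest S K'_def ds_le_m)
    moreover have "sum chi (cheapest m chi K') \<le> sum chi S" using cheapest_sum_le[OF Sm S(2)] .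
    ultimately show ?thesis by (simp add: net_value_def)
  qed
  also have "\<dots> \<le> hv m f chi k" using unimodal_ds[OF f _ k, of K'] lt K'_def by simp
  also have "\<dots> = net_value f chi' A"
    using eq by (simp add: net_value_def A_def)
  finally have AS: "net_value f chi' S \<le> net_value f chi' A" .
  have le2: "\<And>S'. S' \<subseteq> {..<m} \<Longrightarrow> net_value f chi' S' \<le> net_value f chi' S"
    using S(1) unfolding is_maximizer_def by blast
  have "is_maximizer m f chi' A" unfolding is_maximizer_def
  proof (intro conjI allI impI)
    show "A \<subseteq> {..<m}" unfolding A_def by (rule cheapest_sub)
    fix S' assume "S' \<subseteq> {..<m}"
    then show "net_value f chi' S' \<le> net_value f chi' A" using le2 AS by (meson order_trans)
  qed
  then have "card A \<le> K'" using ds_ge K'_def by blast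
  moreover have "card A = k" using km by (simp add: A_def card_cheapest)
  ultimately show False using lt K'_def by simp
qed



definition istar_of :: "nat \<Rightarrow> (nat \<Rightarrow> nat set \<Rightarrow> real) \<Rightarrow> mstate \<Rightarrow> nat" where
  "istar_of m p s = (LEAST i. i \<in> active s \<and> (\<forall>i'\<in>active s.
      card (demand m (p i) (share s)) \<le> card (demand m (p i') (share s))))"

definition step_with :: "nat \<Rightarrow> (nat \<Rightarrow> nat set \<Rightarrow> real) \<Rightarrow> mstate \<Rightarrow> nat \<Rightarrow> nat set \<Rightarrow> mstate" where
  "step_with m c s i A = (let T' = (\<lambda>j. if j \<notin> A then Tset s j - {i} else Tset s j);
     chi' = (\<lambda>j. if j \<notin> A \<and> T' j \<noteq> {} then max (share s j) (c j (T' j) / real (card (T' j))) else share s j)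
   in \<lparr>active = active s - {i}, Tset = T', share = chi', alloc = (alloc s)(i := A)\<rparr>)"

lemma step_eq: "active s \<noteq> {} \<Longrightarrow>
  iacsm_step m c p s = step_with m c s (istar_of m p s) (demand m (p (istar_of m p s)) (share s))"
  by (simp add: iacsm_step_def step_with_def istar_of_def Let_def)

lemma step_empty: "active s = {} \<Longrightarrow> iacsm_step m c p s = s"
  by (simp add: iacsm_step_def)

lemma istar_prop:
  assumes "active s \<noteq> {}"
  shows "istar_of m p s \<in> active s \<and> (\<forall>i'\<in>active s.
      card (demand m (p (istar_of m p s)) (share s)) \<le> card (demand m (p i') (share s)))"
proof -
  obtain i0 where "i0 \<in> active s" using assms by blast
  then obtain i where i: "i \<in> active s" "\<forall>y. y \<in> active s \<longrightarrow>
      card (demand m (p i) (share s)) \<le> card (demand m (p y) (share s))"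
    using ex_has_least_nat[of "\<lambda>i. i \<in> active s" i0 "\<lambda>i. card (demand m (p i) (share s))"] by blast
  show ?thesis unfolding istar_of_def by (rule LeastI[of _ i]) (use i in blast)
qed

lemma istar_least:
  "i \<in> active s \<Longrightarrow> (\<forall>i'\<in>active s. card (demand m (p i) (share s)) \<le> card (demand m (p i') (share s)))
   \<Longrightarrow> istar_of m p s \<le> i"
  unfolding istar_of_def by (rule Least_le) blast

lemma sw_active: "active (step_with m c s i A) = active s - {i}"
  by (simp add: step_with_def Let_def)
lemma sw_alloc: "alloc (step_with m c s i A) = (alloc s)(i := A)"
  by (simp add: step_with_def Let_def)
lemma sw_share_ge: "share s j \<le> share (step_with m c s i A) j"
  by (simp add: step_with_def Let_def)
lemma sw_share_eq: "j \<in> A \<Longrightarrow> share (step_with m c s i A) j = share s j"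
  by (simp add: step_with_def Let_def)

lemma act_step_sub: "active (iacsm_step m c p s) \<subseteq> active s"
  by (cases "active s = {}") (auto simp: step_empty step_eq sw_active)

lemma share_step_ge: "share s j \<le> share (iacsm_step m c p s) j"
  by (cases "active s = {}") (auto simp: step_empty step_eq sw_share_ge)

lemma alloc_keep: "i \<notin> active s \<Longrightarrow> alloc (iacsm_step m c p s) i = alloc s i"
proof (cases "active s = {}")
  case True then show ?thesis by (simp add: step_empty)
next
  case False
  assume i: "i \<notin> active s"
  have "istar_of m p s \<noteq> i" using istar_prop[OF False, of m p] i by auto
  then show ?thesis using False by (simp add: step_eq sw_alloc)
qed

lemma depart:
  assumes "i \<in> active s" "i \<notin> active (iacsm_step m c p s)"
  shows "active s \<noteq> {} \<and> i = istar_of m p s \<and> alloc (iacsm_step m c p s) i = demand m (p i) (share s)"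
proof -
  have ne: "active s \<noteq> {}" using assms by auto
  then have "i = istar_of m p s" using assms by (simp add: step_eq sw_active)
  then show ?thesis using ne by (simp add: step_eq sw_alloc)
qed

definition st :: "nat \<Rightarrow> nat \<Rightarrow> (nat \<Rightarrow> nat set \<Rightarrow> real) \<Rightarrow> (nat \<Rightarrow> nat set \<Rightarrow> real) \<Rightarrow> nat \<Rightarrow> mstate" where
  "st n m c p t = (iacsm_step m c p ^^ t) (iacsm_init n c)"

lemma st_0: "st n m c p 0 = iacsm_init n c" by (simp add: st_def)
lemma st_Suc: "st n m c p (Suc t) = iacsm_step m c p (st n m c p t)" by (simp add: st_def)

lemma act_anti: "t \<le> t' \<Longrightarrow> active (st n m c p t') \<subseteq> active (st n m c p t)"
proof (induction t' rule: dec_induct)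
  case base then show ?case by simp
next
  case (step l) then show ?case using act_step_sub[of m c p "st n m c p l"] by (simp add: st_Suc)
qed

lemma act_sub: "active (st n m c p t) \<subseteq> {..<n}"
  using act_anti[of 0 t n m c p] by (simp add: st_0 iacsm_init_def)

lemma card_act: "card (active (st n m c p t)) = n - t"
proof (induction t)
  case 0 then show ?case by (simp add: st_0 iacsm_init_def)
next
  case (Suc t)
  show ?case
  proof (cases "active (st n m c p t) = {}")
    case True then show ?thesis using Suc by (simp add: st_Suc step_empty)
  next
    case False
    have fin: "finite (active (st n m c p t))" by (rule finite_subset[OF act_sub]) simp
    have "istar_of m p (st n m c p t) \<in> active (st n m c p t)" using istar_prop[OF False] by blast
    then show ?thesis using False Suc fin by (simp add: st_Suc step_eq sw_active)
  qed
qed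

lemma act_n: "active (st n m c p n) = {}"
proof -
  have "finite (active (st n m c p n))" by (rule finite_subset[OF act_sub]) simp
  then show ?thesis using card_act[of n m c p n] by simp
qed

lemma share_mono: "t \<le> t' \<Longrightarrow> share (st n m c p t) j \<le> share (st n m c p t') j"
proof (induction t' rule: dec_induct)
  case base then show ?case by simp
next
  case (step l) then show ?case using share_step_ge[of "st n m c p l" j m c p] by (simp add: st_Suc)
qed

lemma alloc_sub: "alloc (st n m c p t) i \<subseteq> {..<m}"
proof (induction t)
  case 0 then show ?case by (simp add: st_0 iacsm_init_def)
next
  case (Suc t)
  show ?case
  proof (cases "active (st n m c p t) = {}")
    case True then show ?thesis using Suc by (simp add: st_Suc step_empty)
  next
    case False then show ?thesis using Suc demand_sub by (simp add: st_Suc step_eq sw_alloc)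
  qed
qed

lemma alloc_keep_st:
  assumes "i \<notin> active (st n m c p t)" "t \<le> t'"
  shows "alloc (st n m c p t') i = alloc (st n m c p t) i"
  using assms(2)
proof (induction t' rule: dec_induct)
  case base then show ?case by simp
next
  case (step l)
  have "i \<notin> active (st n m c p l)" using act_anti[of t l n m c p] step assms(1) by auto
  then show ?case using step alloc_keep by (simp add: st_Suc)
qed

lemma depart_exists:
  assumes i: "i < n"
  shows "\<exists>\<tau><n. i \<in> active (st n m c p \<tau>) \<and> i \<notin> active (st n m c p (Suc \<tau>))"
proof -
  have "i \<notin> active (st n m c p n)" using act_n by simp
  moreover have "\<not> i \<notin> active (st n m c p 0)" using i by (simp add: st_0 iacsm_init_def)
  ultimately obtain k where k: "k < n" "\<forall>l\<le>k. \<not> i \<notin> active (st n m c p l)" "i \<notin> active (st n m c p (Suc k))"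
    using ex_least_nat_less[of "\<lambda>t. i \<notin> active (st n m c p t)" n] by blast
  show ?thesis using k by (intro exI[of _ k]) auto
qed

definition Inv :: "nat \<Rightarrow> (nat \<Rightarrow> nat set \<Rightarrow> real) \<Rightarrow> mstate \<Rightarrow> nat set \<Rightarrow> bool" where
  "Inv m p s F \<longleftrightarrow> F = cheapest m (share s) (card F) \<and> card F \<le> m \<and>
     (\<forall>i\<in>active s. card F \<le> demand_size m (p i) (share s))"

lemma Inv_init: "Inv m p (iacsm_init n c) {}"
  by (simp add: Inv_def cheapest_def)

lemma Inv_step:
  assumes val: "\<And>i. i \<in> active s \<Longrightarrow> sym_submod_valuation m (p i)"
    and ne: "active s \<noteq> {}" and inv: "Inv m p s F"
  shows "F \<subseteq> demand m (p (istar_of m p s)) (share s) \<and>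
         Inv m p (iacsm_step m c p s) (demand m (p (istar_of m p s)) (share s)) \<and>
         (\<forall>j\<in>demand m (p (istar_of m p s)) (share s). share (iacsm_step m c p s) j = share s j)"
proof -
  define i where "i = istar_of m p s"
  define chi where "chi = share s"
  define A where "A = demand m (p i) chi"
  define s' where "s' = iacsm_step m c p s"
  define chi' where "chi' = share s'"
  have ip: "i \<in> active s" "\<forall>i'\<in>active s. card (demand m (p i) chi) \<le> card (demand m (p i') chi)"
    using istar_prop[OF ne, of m p] by (simp_all add: i_def chi_def)
  have s'eq: "s' = step_with m c s i A" using ne by (simp add: s'_def step_eq i_def A_def chi_def)
  have eqA: "\<And>j. j \<in> A \<Longrightarrow> chi' j = chi j" by (simp add: chi'_def s'eq sw_share_eq chi_def)
  have geA: "\<And>j. chi j \<le> chi' j" by (simp add: chi'_def s'eq sw_share_ge chi_def)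
  have cA: "card A = demand_size m (p i) chi" by (simp add: A_def card_demand)
  have Ach: "A = cheapest m chi (card A)" unfolding cA by (simp add: A_def demand_def)
  have F1: "F = cheapest m chi (card F)" "card F \<le> demand_size m (p i) chi"
    using inv ip(1) by (auto simp: Inv_def chi_def)
  have FA: "F \<subseteq> A" using F1 cheapest_mono[OF F1(2), of m chi] by (simp add: A_def demand_def)
  have st1: "cheapest m chi' (card A) = A"
    using cheapest_stable[of m chi "card A" chi'] eqA geA Ach by simp
  have act': "active s' = active s - {i}" by (simp add: s'eq sw_active)
  have dsA: "card A \<le> demand_size m (p i') chi'" if i': "i' \<in> active s'" for i'
  proof -
    have i's: "i' \<in> active s" using i' act' by auto
    have "card A \<le> demand_size m (p i') chi"
      using ip(2) i's by (simp add: A_def card_demand)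
    then show ?thesis
      using ds_mono[OF val[OF i's], of "card A" chi chi'] eqA geA Ach by simp
  qed
  have "Inv m p s' A"
    unfolding Inv_def using st1 dsA ds_le_m[of m "p i" chi] cA by (simp add: chi'_def)
  then show ?thesis using FA eqA
    by (simp add: i_def[symmetric] chi_def[symmetric] A_def[symmetric] s'_def[symmetric] chi'_def[symmetric])
qed

lemma act_steps_sub: "active ((iacsm_step m c p ^^ k) s) \<subseteq> active s"
proof (induction k)
  case 0 then show ?case by simp
next
  case (Suc k) then show ?case using act_step_sub[of m c p "(iacsm_step m c p ^^ k) s"] by auto
qed

lemma Inv_steps:
  assumes val: "\<And>i. i \<in> active s \<Longrightarrow> sym_submod_valuation m (p i)"
    and inv: "Inv m p s F"
  shows "\<exists>F'. F \<subseteq> F' \<and> Inv m p ((iacsm_step m c p ^^ k) s) F' \<and>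
           (\<forall>j\<in>F. share ((iacsm_step m c p ^^ k) s) j = share s j)"
proof (induction k)
  case 0 then show ?case using inv by auto
next
  case (Suc k)
  then obtain F' where F': "F \<subseteq> F'" "Inv m p ((iacsm_step m c p ^^ k) s) F'"
    "\<forall>j\<in>F. share ((iacsm_step m c p ^^ k) s) j = share s j" by blast
  define s1 where "s1 = (iacsm_step m c p ^^ k) s"
  show ?case
  proof (cases "active s1 = {}")
    case True then show ?thesis using F' by (intro exI[of _ F']) (simp add: s1_def[symmetric] step_empty)
  next
    case False
    have val1: "\<And>i. i \<in> active s1 \<Longrightarrow> sym_submod_valuation m (p i)"
      using val act_steps_sub[where m=m and c=c and p=p and k=k and s=s] by (auto simp: s1_def)
    have "F' \<subseteq> demand m (p (istar_of m p s1)) (share s1) \<and>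
         Inv m p (iacsm_step m c p s1) (demand m (p (istar_of m p s1)) (share s1)) \<and>
         (\<forall>j\<in>demand m (p (istar_of m p s1)) (share s1). share (iacsm_step m c p s1) j = share s1 j)"
      using Inv_step[where s=s1 and m=m and p=p and F=F' and c=c] val1 False F'(2) unfolding s1_def by blast
    then show ?thesis using F' unfolding s1_def by (intro exI[of _ "demand m (p (istar_of m p s1)) (share s1)"]) (auto simp: s1_def)
  qed
qed

lemma Inv_st:
  assumes val: "\<And>i. i < n \<Longrightarrow> sym_submod_valuation m (p i)"
  shows "\<exists>F. Inv m p (st n m c p t) F"
proof -
  have val0: "\<And>i. i \<in> active (iacsm_init n c) \<Longrightarrow> sym_submod_valuation m (p i)"
    using val by (simp add: iacsm_init_def)
  show ?thesis using Inv_steps[OF val0 Inv_init[of m p n c], where k=t] unfolding st_def by blast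
qed

lemma fixed:
  assumes val: "\<And>i. i < n \<Longrightarrow> sym_submod_valuation m (p i)"
    and d1: "i \<in> active (st n m c p \<tau>)" and d2: "i \<notin> active (st n m c p (Suc \<tau>))"
    and t: "\<tau> \<le> t" and j: "j \<in> demand m (p i) (share (st n m c p \<tau>))"
  shows "share (st n m c p t) j = share (st n m c p \<tau>) j"
proof (cases "t = \<tau>")
  case True then show ?thesis by simp
next
  case False
  have valA: "\<And>s i. active s \<subseteq> {..<n} \<Longrightarrow> i \<in> active s \<Longrightarrow> sym_submod_valuation m (p i)"
    using val by auto
  have val0: "\<And>i. i \<in> active (iacsm_init n c) \<Longrightarrow> sym_submod_valuation m (p i)"
    using val by (simp add: iacsm_init_def)
  obtain F where F: "Inv m p (st n m c p \<tau>) F"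
    using Inv_st[of n m p c \<tau>] val by blast
  have dep: "active (st n m c p \<tau>) \<noteq> {}" "i = istar_of m p (st n m c p \<tau>)"
    using depart[OF d1 d2[unfolded st_Suc]] by simp_all
  have vt: "\<And>i. i \<in> active (st n m c p \<tau>) \<Longrightarrow> sym_submod_valuation m (p i)"
    using valA[OF act_sub] by blast
  have S: "Inv m p (st n m c p (Suc \<tau>)) (demand m (p i) (share (st n m c p \<tau>)))"
    "\<forall>j\<in>demand m (p i) (share (st n m c p \<tau>)). share (st n m c p (Suc \<tau>)) j = share (st n m c p \<tau>) j"
    using Inv_step[where s="st n m c p \<tau>" and m=m and p=p and F=F and c=c] vt dep F
    unfolding st_Suc by auto
  have vt1: "\<And>i. i \<in> active (st n m c p (Suc \<tau>)) \<Longrightarrow> sym_submod_valuation m (p i)"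
    using valA[OF act_sub] by blast
  obtain F' where "\<forall>j'\<in>demand m (p i) (share (st n m c p \<tau>)).
      share ((iacsm_step m c p ^^ (t - Suc \<tau>)) (st n m c p (Suc \<tau>))) j' = share (st n m c p (Suc \<tau>)) j'"
    using Inv_steps[where s="st n m c p (Suc \<tau>)" and m=m and p=p and F="demand m (p i) (share (st n m c p \<tau>))" and c=c and k="t - Suc \<tau>"] vt1 S(1) by blast
  moreover have "(iacsm_step m c p ^^ (t - Suc \<tau>)) (st n m c p (Suc \<tau>)) = st n m c p t"
  proof -
    define d where "d = t - Suc \<tau>"
    have td: "t = d + Suc \<tau>" using t False by (simp add: d_def)
    have "(iacsm_step m c p ^^ (d + Suc \<tau>)) (iacsm_init n c) = (iacsm_step m c p ^^ d) ((iacsm_step m c p ^^ Suc \<tau>) (iacsm_init n c))"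
      by (simp only: funpow_add comp_apply)
    then show ?thesis unfolding st_def d_def[symmetric] td[symmetric] by (rule sym)
  qed
  ultimately show ?thesis using S(2) j by simp
qed

lemma util_st: "iacsm_utility n m c vi p i =
   vi (alloc (st n m c p n) i) - sum (share (st n m c p n)) (alloc (st n m c p n) i)"
  by (simp add: iacsm_utility_def iacsm_payment_def iacsm_bundle_def iacsm_final_def st_def)

lemma util_truth:
  assumes val: "\<And>i. i < n \<Longrightarrow> sym_submod_valuation m (p i)"
    and d1: "i \<in> active (st n m c p \<tau>)" and d2: "i \<notin> active (st n m c p (Suc \<tau>))" and tn: "\<tau> < n"
  shows "iacsm_utility n m c (p i) p i = net_value (p i) (share (st n m c p \<tau>)) (demand m (p i) (share (st n m c p \<tau>)))"
proof -
  have a1: "alloc (st n m c p (Suc \<tau>)) i = demand m (p i) (share (st n m c p \<tau>))"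
    using depart[OF d1 d2[unfolded st_Suc]] unfolding st_Suc by blast
  have a2: "alloc (st n m c p n) i = alloc (st n m c p (Suc \<tau>)) i"
    using alloc_keep_st[OF d2, of n] tn by simp
  have "sum (share (st n m c p n)) (demand m (p i) (share (st n m c p \<tau>)))
      = sum (share (st n m c p \<tau>)) (demand m (p i) (share (st n m c p \<tau>)))"
    using fixed[OF val d1 d2, of n] tn by (intro sum.cong) auto
  then show ?thesis by (simp add: util_st a1 a2 net_value_def)
qed

lemma util_upper:
  assumes "t \<le> n"
  shows "iacsm_utility n m c vi p i \<le> vi (alloc (st n m c p n) i) - sum (share (st n m c p t)) (alloc (st n m c p n) i)"
proof -
  have "sum (share (st n m c p t)) (alloc (st n m c p n) i) \<le> sum (share (st n m c p n)) (alloc (st n m c p n) i)"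
    using share_mono[OF assms] by (intro sum_mono) auto
  then show ?thesis by (simp add: util_st)
qed



theorem mainTheorem7:
  fixes n m :: nat
    and c :: "nat \<Rightarrow> nat set \<Rightarrow> real"
    and v b :: "nat \<Rightarrow> nat set \<Rightarrow> real"
    and Q :: "nat set"
  assumes cost: "\<And>j. j < m \<Longrightarrow> nonneg_on {..<n} (c j) \<and> nondecreasing_on {..<n} (c j)"
    and true_vals: "\<And>i. i < n \<Longrightarrow> sym_submod_valuation m (v i)"
    and misreports: "\<And>i. i \<in> Q \<Longrightarrow> sym_submod_valuation m (b i)"
    and coalition: "Q \<subseteq> {..<n}" "Q \<noteq> {}"
  shows "\<exists>i\<in>Q. iacsm_utility n m c (v i) (\<lambda>k. if k \<in> Q then b k else v k) i
              \<le> iacsm_utility n m c (v i) v i"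
proof -
  define b' where "b' = (\<lambda>k. if k \<in> Q then b k else v k)"
  have valb: "\<And>i. i < n \<Longrightarrow> sym_submod_valuation m (b' i)"
    using misreports true_vals by (simp add: b'_def)
  have goal: "\<exists>i\<in>Q. iacsm_utility n m c (v i) b' i \<le> iacsm_utility n m c (v i) v i"
  proof (cases "st n m c v n = st n m c b' n")
    case True
    obtain i where i: "i \<in> Q" using coalition(2) by blast
    show ?thesis by (rule bexI[OF _ i]) (simp add: util_st True)
  next
    case False
    have "\<not> st n m c v 0 \<noteq> st n m c b' 0" by (simp add: st_0)
    then obtain t0 where t0: "t0 < n" "\<forall>l\<le>t0. \<not> st n m c v l \<noteq> st n m c b' l"
      "st n m c v (Suc t0) \<noteq> st n m c b' (Suc t0)"
      using ex_least_nat_less[of "\<lambda>t. st n m c v t \<noteq> st n m c b' t" n] False by blast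
    define s where "s = st n m c v t0"
    have sb: "st n m c b' t0 = s" using t0(2) by (simp add: s_def)
    define chi where "chi = share s"
    define X where "X = active s"
    have ne: "X \<noteq> {}"
    proof
      assume "X = {}"
      then have "st n m c v (Suc t0) = s" "st n m c b' (Suc t0) = s"
        by (simp_all add: st_Suc s_def[symmetric] sb step_empty X_def)
      then show False using t0(3) by simp
    qed
    define i1 where "i1 = istar_of m v s"
    define i2 where "i2 = istar_of m b' s"
    have p1: "i1 \<in> X" "\<forall>y\<in>X. card (demand m (v i1) chi) \<le> card (demand m (v y) chi)"
      using istar_prop[OF ne[unfolded X_def], of m v] by (simp_all add: i1_def X_def chi_def)
    have p2: "i2 \<in> X" "\<forall>y\<in>X. card (demand m (b' i2) chi) \<le> card (demand m (b' y) chi)"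
      using istar_prop[OF ne[unfolded X_def], of m b'] by (simp_all add: i2_def X_def chi_def)
    have stv: "st n m c v (Suc t0) = step_with m c s i1 (demand m (v i1) chi)"
      using ne by (simp add: st_Suc s_def[symmetric] step_eq i1_def chi_def X_def)
    have stb: "st n m c b' (Suc t0) = step_with m c s i2 (demand m (b' i2) chi)"
      using ne by (simp add: st_Suc sb step_eq i2_def chi_def X_def)
    have diff: "i1 \<noteq> i2 \<or> demand m (v i1) chi \<noteq> demand m (b' i2) chi"
      using t0(3) stv stb by auto
    have Xn: "X \<subseteq> {..<n}" using act_sub by (simp add: X_def s_def)
    have i1n: "i1 < n" using p1 Xn by auto
    have i2n: "i2 < n" using p2 Xn by auto
    have dep1: "i1 \<in> active (st n m c v t0)" "i1 \<notin> active (st n m c v (Suc t0))"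
      using p1 by (simp_all add: stv sw_active s_def[symmetric] X_def)
    have util1: "iacsm_utility n m c (v i1) v i1 = net_value (v i1) chi (demand m (v i1) chi)"
      using util_truth[OF true_vals dep1 t0(1)] by (simp add: s_def[symmetric] chi_def)
    show ?thesis
    proof (cases "i1 \<in> Q")
      case True
      define Al where "Al = alloc (st n m c b' n) i1"
      have "iacsm_utility n m c (v i1) b' i1 \<le> v i1 Al - sum chi Al"
        using util_upper[of t0 n m c "v i1" b' i1] t0(1) by (simp add: sb Al_def chi_def)
      also have "\<dots> = net_value (v i1) chi Al" by (simp add: net_value_def)
      also have "\<dots> \<le> net_value (v i1) chi (demand m (v i1) chi)"
        using demand_max[OF true_vals[OF i1n], of chi] alloc_sub[of n m c b' n i1]
        unfolding is_maximizer_def Al_def by blast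
      finally have "iacsm_utility n m c (v i1) b' i1 \<le> iacsm_utility n m c (v i1) v i1"
        using util1 by simp
      then show ?thesis using True by blast
    next
      case False
      have Dsame: "demand m (b' i1) chi = demand m (v i1) chi" using False by (simp add: b'_def)
      have i2Q: "i2 \<in> Q"
      proof (rule ccontr)
        assume nq: "i2 \<notin> Q"
        have D2: "demand m (b' i2) chi = demand m (v i2) chi" using nq by (simp add: b'_def)
        have cb: "\<And>y. card (demand m (b' y) chi) = card (demand m (v y) chi) \<or> y \<in> Q"
          by (simp add: b'_def)
        have "\<forall>y\<in>X. card (demand m (v i2) chi) \<le> card (demand m (v y) chi)"
          using p1(2) p2(2) p1(1) D2 Dsame by (metis order_trans)
        then have le1: "i1 \<le> i2" using istar_least[of i2 s m v] p2(1)
          by (simp add: i1_def X_def chi_def)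
        have "\<forall>y\<in>X. card (demand m (b' i1) chi) \<le> card (demand m (b' y) chi)"
          using p1(2) p2(2) p2(1) D2 Dsame by (metis order_trans)
        then have le2: "i2 \<le> i1" using istar_least[of i1 s m b'] p1(1)
          by (simp add: i2_def X_def chi_def)
        have "i1 = i2" using le1 le2 by simp
        then show False using diff D2 by simp
      qed
      define k1 where "k1 = demand_size m (v i1) chi"
      define k2 where "k2 = demand_size m (b' i2) chi"
      have k2k1: "k2 \<le> k1"
      proof -
        have "card (demand m (b' i2) chi) \<le> card (demand m (b' i1) chi)" using p2(2) p1(1) by blast
        then show ?thesis using Dsame by (simp add: k1_def k2_def card_demand[symmetric])
      qed
      have k1K: "k1 \<le> demand_size m (v i2) chi" using p1(2) p2(1) by (simp add: k1_def card_demand)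
      have a2: "alloc (st n m c b' (Suc t0)) i2 = demand m (b' i2) chi" by (simp add: stb sw_alloc)
      have na2: "i2 \<notin> active (st n m c b' (Suc t0))" by (simp add: stb sw_active)
      have a2n: "alloc (st n m c b' n) i2 = demand m (b' i2) chi"
        using alloc_keep_st[OF na2, of n] t0(1) a2 by simp
      have u2: "iacsm_utility n m c (v i2) b' i2 \<le> hv m (v i2) chi k2"
        using util_upper[of t0 n m c "v i2" b' i2] t0(1) a2n
        by (simp add: sb chi_def net_value_def demand_def k2_def)
      obtain \<tau> where tau: "\<tau> < n" "i2 \<in> active (st n m c v \<tau>)" "i2 \<notin> active (st n m c v (Suc \<tau>))"
        using depart_exists[OF i2n, of m c v] by blast
      have tt: "t0 \<le> \<tau>"
      proof (rule ccontr)
        assume "\<not> t0 \<le> \<tau>"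
        then have "active (st n m c v t0) \<subseteq> active (st n m c v (Suc \<tau>))" by (intro act_anti) simp
        then show False using tau(3) p2(1) by (auto simp: X_def s_def)
      qed
      define chit where "chit = share (st n m c v \<tau>)"
      have ut: "iacsm_utility n m c (v i2) v i2 = net_value (v i2) chit (demand m (v i2) chit)"
        using util_truth[OF true_vals tau(2) tau(3) tau(1)] by (simp add: chit_def)
      have "net_value (v i2) chit (demand m (v i1) chi) \<le> net_value (v i2) chit (demand m (v i2) chit)"
        using demand_max[OF true_vals[OF i2n], of chit] demand_sub[of m "v i1" chi]
        unfolding is_maximizer_def by blast
      moreover have "sum chit (demand m (v i1) chi) = sum chi (demand m (v i1) chi)"
      proof (rule sum.cong)
        fix j assume j: "j \<in> demand m (v i1) chi"
        show "chit j = chi j"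
          using fixed[OF true_vals dep1 tt, of j] j by (simp add: chit_def chi_def s_def)
      qed simp
      moreover have "hv m (v i2) chi k2 \<le> hv m (v i2) chi k1"
        by (rule unimodal_ds[OF true_vals[OF i2n] k2k1 k1K])
      ultimately have "hv m (v i2) chi k2 \<le> iacsm_utility n m c (v i2) v i2"
        using ut by (simp add: net_value_def demand_def k1_def)
      then show ?thesis using u2 i2Q by force
    qed
  qed
  then show ?thesis by (simp add: b'_def)
qed


end
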